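(* Let $X=(X(t))_{t\in\mathbb{R}}$ be a process with $X(0)=0$ a.s., independent and stationary increments in the sense that for $s_0<s_1<\dots<s_m$ the increments $X(s_i)-X(s_{i-1})$ are independent and $X(t)-X(s)\overset{(d)}{=}X(t-s)$ for all $t>s$ (whatever the signs of $s,t$), and such that for each $t\ne0$, $X(t)$ has a density $\Phi_t$ with respect to Lebesgue measure. Let $k\ge1$ and let $t_0=0,t_1,\dots,t_k$ be $k+1$ distinct reals whose gaps sequence is $(g_1,\dots,g_k)\in(0,\infty)^k$. Then the gaps sequence of $(X(t_0),\dots,X(t_k))$ has density on $(\mathbb{R}^+)^k$ given by $$\Psi_{g}(x_1,\dots,x_k)=\sum_{\tau}\prod_{i=1}^k\Phi_{g_i}\big(\bar x_{\tau(i)}-\bar x_{\tau(i-1)}\big)\,1_{x_i>0},$$ the sum being over all permutations $\tau$ of $\{0,1,\dots,k\}$, where $\bar x_0=0$ and $\bar x_i=x_1+\dots+x_i$.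
   Context: For a finite sequence $\ell_0,\dots,\ell_k$ with increasing rearrangement $\hat\ell_0\le\dots\le\hat\ell_k$, its gaps sequence is $(\hat\ell_i-\hat\ell_{i-1})_{1\le i\le k}$. *)

theory Defs
  imports "HOL-Probability.Probability" "HOL-Combinatorics.Permutations"
begin

definition gaps_seq :: "nat \<Rightarrow> (nat \<Rightarrow> real) \<Rightarrow> nat \<Rightarrow> real" where
  "gaps_seq k l = (\<lambda>i\<in>{1..k}. let s = sort (map l [0..<Suc k]) in s ! i - s ! (i - 1))"

definition xbar :: "(nat \<Rightarrow> real) \<Rightarrow> nat \<Rightarrow> real" where
  "xbar x i = (\<Sum>j=1..i. x j)"

definition Psi :: "(real \<Rightarrow> real \<Rightarrow> ennreal) \<Rightarrow> nat \<Rightarrow> (nat \<Rightarrow> real) \<Rightarrow> (nat \<Rightarrow> real) \<Rightarrow> ennreal" where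
  "Psi \<Phi> k g x = (\<Sum>\<tau> | \<tau> permutes {0..k}.
      \<Prod>i=1..k. \<Phi> (g i) (xbar x (\<tau> i) - xbar x (\<tau> (i - 1))) * (if x i > 0 then 1 else 0))"

end

theory Submission
  imports Defs
begin


abbreviation PL :: "nat set \<Rightarrow> (nat \<Rightarrow> real) measure" where
  "PL I \<equiv> PiM I (\<lambda>_. lborel)"

interpretation PSF: product_sigma_finite "\<lambda>_::nat. lborel::real measure"
  by standard

lemma shear_aux:
  fixes I :: "nat set"
  assumes I: "finite I" "i \<in> I" and f[measurable]: "f \<in> borel_measurable (PL I)"
   and c[measurable]: "c \<in> borel_measurable (PL I)" and cind: "\<And>x y. c (x(i:=y)) = c x"
   and a: "a = 1 \<or> a = -1"
  shows "(\<integral>\<^sup>+x. f (\<lambda>j\<in>I. if j = i then a * x i + c x else x j) \<partial>PL I) = (\<integral>\<^sup>+x. f x \<partial>PL I)"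
proof -
  define J where "J = I - {i}"
  have IJ: "I = insert i J" "i \<notin> J" "finite J" using I by (auto simp: J_def)
  have comp: "\<And>j. j \<in> I \<Longrightarrow> (\<lambda>x. x j) \<in> borel_measurable (PL I)"
    using measurable_component_singleton[of _ I "\<lambda>_. lborel"] by simp
  have m0: "(\<lambda>x. \<lambda>j\<in>I. if j = i then a * x i + c x else x j) \<in> measurable (PL I) (PL I)"
  proof (rule measurable_restrict)
    fix j assume j: "j \<in> I"
    show "(\<lambda>x. if j = i then a * x i + c x else x j) \<in> measurable (PL I) lborel"
      using comp[OF j] comp[OF I(2)] c by (cases "j = i") auto
  qed
  have m1: "(\<lambda>x. f (\<lambda>j\<in>I. if j = i then a * x i + c x else x j)) \<in> borel_measurable (PL I)"
    using measurable_comp[OF m0 f] by (simp add: comp_def)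
  have "(\<integral>\<^sup>+x. f (\<lambda>j\<in>I. if j = i then a * x i + c x else x j) \<partial>PL I)
      = (\<integral>\<^sup>+ x. (\<integral>\<^sup>+ y. f (\<lambda>j\<in>I. if j = i then a * (x(i:=y)) i + c (x(i:=y)) else (x(i:=y)) j) \<partial>lborel) \<partial>PL J)"
    using PSF.product_nn_integral_insert[OF IJ(3,2), of "\<lambda>x. f (\<lambda>j\<in>I. if j = i then a * x i + c x else x j)"]
      m1 IJ(1) by simp
  also have "\<dots> = (\<integral>\<^sup>+ x. (\<integral>\<^sup>+ y. f (x(i:=y)) \<partial>lborel) \<partial>PL J)"
  proof (rule nn_integral_cong)
    fix x assume x: "x \<in> space (PL J)"
    have mm: "(\<lambda>y. f (x(i:=y))) \<in> borel_measurable borel"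
      using measurable_comp[OF measurable_component_update[OF x IJ(2)], of f "borel"] f IJ(1)
      by (simp add: comp_def)
    have e: "(\<lambda>j\<in>I. if j = i then a * (x(i:=y)) i + c (x(i:=y)) else (x(i:=y)) j) = x(i := c x + a * y)" for y
      using x IJ by (auto simp: cind space_PiM PiE_def extensional_def fun_eq_iff)
    have "(\<integral>\<^sup>+ y. f (x(i:=y)) \<partial>lborel) = ennreal \<bar>a\<bar> * (\<integral>\<^sup>+ y. f (x(i:=c x + a * y)) \<partial>lborel)"
      using nn_integral_real_affine[OF mm, of a "c x"] a by auto
    also have "\<dots> = (\<integral>\<^sup>+ y. f (x(i:=c x + a * y)) \<partial>lborel)" using a by auto
    finally show "(\<integral>\<^sup>+ y. f (\<lambda>j\<in>I. if j = i then a * (x(i:=y)) i + c (x(i:=y)) else (x(i:=y)) j) \<partial>lborel)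
       = (\<integral>\<^sup>+ y. f (x(i:=y)) \<partial>lborel)" by (simp add: e)
  qed
  also have "\<dots> = (\<integral>\<^sup>+x. f x \<partial>PL I)"
    using PSF.product_nn_integral_insert[OF IJ(3,2), of f] f IJ(1) by simp
  finally show ?thesis .
qed

lemma perm_pres:
  fixes I :: "nat set"
  assumes I: "finite I" and r: "bij_betw r I I" and f[measurable]: "f \<in> borel_measurable (PL I)"
  shows "(\<integral>\<^sup>+x. f (\<lambda>j\<in>I. x (r j)) \<partial>PL I) = (\<integral>\<^sup>+x. f x \<partial>PL I)"
proof -
  have mr: "(\<lambda>x. \<lambda>j\<in>I. x (r j)) \<in> measurable (PL I) (PL I)"
  proof (rule measurable_restrict)
    fix j assume "j \<in> I"
    then have "r j \<in> I" using r by (auto simp: bij_betw_def)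
    then show "(\<lambda>x. x (r j)) \<in> measurable (PL I) lborel"
      using measurable_component_singleton[of _ I "\<lambda>_. lborel"] by simp
  qed
  have "distr (PL I) (PL I) (\<lambda>x. \<lambda>j\<in>I. x (r j)) = PL I"
  proof (rule PSF.PiM_eqI[OF I])
    show "sets (distr (PL I) (PL I) (\<lambda>x. \<lambda>j\<in>I. x (r j))) = sets (PL I)" by simp
    fix A :: "nat \<Rightarrow> real set" assume A: "\<And>i. i \<in> I \<Longrightarrow> A i \<in> sets lborel"
    have pre: "(\<lambda>x. \<lambda>j\<in>I. x (r j)) -` Pi\<^sub>E I A \<inter> space (PL I) = Pi\<^sub>E I (\<lambda>i. A (the_inv_into I r i))"
    proof -
      have rr: "\<And>j. j \<in> I \<Longrightarrow> r j \<in> I" "\<And>j. j \<in> I \<Longrightarrow> the_inv_into I r (r j) = j"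
        "\<And>i. i \<in> I \<Longrightarrow> r (the_inv_into I r i) = i" "\<And>i. i \<in> I \<Longrightarrow> the_inv_into I r i \<in> I"
        using r by (auto simp: bij_betw_def the_inv_into_f_f f_the_inv_into_f the_inv_into_into)
      show ?thesis
        apply (auto simp: space_PiM PiE_def Pi_def extensional_def rr)
        subgoal for x j using rr(3)[of j] rr(4)[of j]
          by (erule_tac x="the_inv_into I r j" in allE) simp
        subgoal for x j using rr(1)[of j] rr(2)[of j]
          by (erule_tac x="r j" in allE) simp
        done
    qed
    have "emeasure (distr (PL I) (PL I) (\<lambda>x. \<lambda>j\<in>I. x (r j))) (Pi\<^sub>E I A)
        = emeasure (PL I) (Pi\<^sub>E I (\<lambda>i. A (the_inv_into I r i)))"
      using A mr I by (subst emeasure_distr) (auto simp: pre intro!: sets_PiM_I_finite)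
    also have "\<dots> = (\<Prod>i\<in>I. emeasure lborel (A (the_inv_into I r i)))"
      using A r I by (subst PSF.emeasure_PiM) (auto simp: bij_betw_def the_inv_into_into)
    also have "\<dots> = (\<Prod>i\<in>I. emeasure lborel (A i))"
    proof -
      have "bij_betw (the_inv_into I r) I I" using r by (simp add: bij_betw_the_inv_into)
      then show ?thesis by (rule prod.reindex_bij_betw)
    qed
    finally show "emeasure (distr (PL I) (PL I) (\<lambda>x. \<lambda>j\<in>I. x (r j))) (Pi\<^sub>E I A) = (\<Prod>i\<in>I. emeasure lborel (A i))" .
  qed
  then have "(\<integral>\<^sup>+x. f x \<partial>PL I) = (\<integral>\<^sup>+x. f x \<partial>distr (PL I) (PL I) (\<lambda>x. \<lambda>j\<in>I. x (r j)))" by simp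
  also have "\<dots> = (\<integral>\<^sup>+x. f (\<lambda>j\<in>I. x (r j)) \<partial>PL I)"
    using mr by (simp add: nn_integral_distr)
  finally show ?thesis ..
qed



lemma comp_meas: "j \<in> I \<Longrightarrow> (\<lambda>x. x j) \<in> borel_measurable (PL I)"
  using measurable_component_singleton[of _ I "\<lambda>_. lborel"] by simp

definition hat :: "(nat \<Rightarrow> real) \<Rightarrow> nat \<Rightarrow> real" where
  "hat y j = (if j = 0 then 0 else y j)"

lemma hat_meas: "j = 0 \<or> j \<in> I \<Longrightarrow> (\<lambda>x. hat x j) \<in> borel_measurable (PL I)"
  unfolding hat_def by (cases "j = 0") (auto intro: comp_meas)

definition shear :: "nat set \<Rightarrow> nat \<Rightarrow> real \<Rightarrow> ((nat \<Rightarrow> real) \<Rightarrow> real) \<Rightarrow> (nat \<Rightarrow> real) \<Rightarrow> nat \<Rightarrow> real" where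
  "shear I i a c = (\<lambda>x. \<lambda>j\<in>I. if j = i then a * x i + c x else x j)"

lemma shear_meas:
  assumes "i \<in> I" "c \<in> borel_measurable (PL I)"
  shows "shear I i a c \<in> measurable (PL I) (PL I)"
  unfolding shear_def
proof (rule measurable_restrict)
  fix j assume j: "j \<in> I"
  show "(\<lambda>x. if j = i then a * x i + c x else x j) \<in> measurable (PL I) lborel"
    using comp_meas[OF j] comp_meas[OF assms(1)] assms(2) by (cases "j = i") auto
qed

lemma shear_pres:
  assumes "finite I" "i \<in> I" "f \<in> borel_measurable (PL I)"
   "c \<in> borel_measurable (PL I)" "\<And>x y. c (x(i:=y)) = c x" "a = 1 \<or> a = -1"
  shows "(\<integral>\<^sup>+x. f (shear I i a c x) \<partial>PL I) = (\<integral>\<^sup>+x. f x \<partial>PL I)"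
  unfolding shear_def by (rule shear_aux[OF assms])

lemma chain_pres:
  assumes T0: "\<And>x. x \<in> space (PL I) \<Longrightarrow> T 0 x = x"
   and TS: "\<And>n x. n < N \<Longrightarrow> T (Suc n) x = S n (T n x)"
   and Sm: "\<And>n. n < N \<Longrightarrow> S n \<in> measurable (PL I) (PL I)"
   and Sp: "\<And>n f. n < N \<Longrightarrow> f \<in> borel_measurable (PL I) \<Longrightarrow> (\<integral>\<^sup>+x. f (S n x) \<partial>PL I) = (\<integral>\<^sup>+x. f x \<partial>PL I)"
  shows "f \<in> borel_measurable (PL I) \<Longrightarrow> (\<integral>\<^sup>+x. f (T N x) \<partial>PL I) = (\<integral>\<^sup>+x. f x \<partial>PL I)"
  using assms(2-)
proof (induction N arbitrary: f)
  case 0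
  then show ?case using T0 by (intro nn_integral_cong) simp
next
  case (Suc N)
  have m: "(\<lambda>x. f (S N x)) \<in> borel_measurable (PL I)"
    using measurable_comp[OF Suc.prems(3)[of N] Suc.prems(1)] by (simp add: comp_def)
  have "(\<integral>\<^sup>+x. f (T (Suc N) x) \<partial>PL I) = (\<integral>\<^sup>+x. f (S N (T N x)) \<partial>PL I)"
    using Suc.prems(2) by simp
  also have "\<dots> = (\<integral>\<^sup>+x. f (S N x) \<partial>PL I)"
    using Suc.IH[OF m] Suc.prems by auto
  also have "\<dots> = (\<integral>\<^sup>+x. f x \<partial>PL I)" using Suc.prems by auto
  finally show ?case .
qed

definition Cm :: "nat \<Rightarrow> (nat \<Rightarrow> real) \<Rightarrow> nat \<Rightarrow> real" where
  "Cm k x = (\<lambda>i\<in>{1..k}. xbar x i)"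
definition Dm :: "nat \<Rightarrow> (nat \<Rightarrow> real) \<Rightarrow> nat \<Rightarrow> real" where
  "Dm k z = (\<lambda>i\<in>{1..k}. hat z i - hat z (i - 1))"
definition Wm :: "nat \<Rightarrow> nat \<Rightarrow> (nat \<Rightarrow> real) \<Rightarrow> nat \<Rightarrow> real" where
  "Wm k a y = (\<lambda>j\<in>{1..k}. if j = a then - hat y a else y j - hat y a)"
definition Pm :: "nat \<Rightarrow> (nat \<Rightarrow> nat) \<Rightarrow> (nat \<Rightarrow> real) \<Rightarrow> nat \<Rightarrow> real" where
  "Pm k r z = (\<lambda>i\<in>{1..k}. z (r i))"

lemma xbar_Suc: "xbar x (Suc n) = xbar x n + x (Suc n)"
  by (simp add: xbar_def)
lemma xbar_0[simp]: "xbar x 0 = 0"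
  by (simp add: xbar_def)

lemma xbar_meas: "i \<le> k \<Longrightarrow> (\<lambda>x. xbar x i) \<in> borel_measurable (PL {1..k})"
  unfolding xbar_def by (intro borel_measurable_sum comp_meas) auto

lemma Cm_meas: "Cm k \<in> measurable (PL {1..k}) (PL {1..k})"
  unfolding Cm_def
proof (rule measurable_restrict)
  fix i assume "i \<in> {1..k}"
  then have "i \<le> k" by simp
  from xbar_meas[OF this] show "(\<lambda>x. xbar x i) \<in> measurable (PL {1..k}) lborel" by simp
qed

lemma Dm_meas: "Dm k \<in> measurable (PL {1..k}) (PL {1..k})"
  unfolding Dm_def by (rule measurable_restrict) (auto intro!: borel_measurable_diff hat_meas)

lemma Wm_meas: assumes "a \<le> k" shows "Wm k a \<in> measurable (PL {1..k}) (PL {1..k})"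
  unfolding Wm_def
proof (rule measurable_restrict)
  fix j assume j: "j \<in> {1..k}"
  have h: "(\<lambda>x. hat x a) \<in> borel_measurable (PL {1..k})" using assms by (intro hat_meas) auto
  have c: "(\<lambda>x. x j) \<in> borel_measurable (PL {1..k})" using j by (intro comp_meas)
  show "(\<lambda>x. if j = a then - hat x a else x j - hat x a) \<in> measurable (PL {1..k}) lborel"
    using h c by (cases "j = a") auto
qed

lemma Pm_meas: "r \<in> {1..k} \<rightarrow> {1..k} \<Longrightarrow> Pm k r \<in> measurable (PL {1..k}) (PL {1..k})"
  unfolding Pm_def
  by (rule measurable_restrict) (auto intro!: comp_meas)

lemma Cm_pres:
  assumes f: "f \<in> borel_measurable (PL {1..k})"
  shows "(\<integral>\<^sup>+x. f (Cm k x) \<partial>PL {1..k}) = (\<integral>\<^sup>+x. f x \<partial>PL {1..k})"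
proof -
  define T where "T n x = (\<lambda>i\<in>{1..k}. if i \<le> n then xbar x i else x i)" for n x
  define S where "S n = shear {1..k} (Suc n) 1 (\<lambda>z. hat z n)" for n
  have "(\<integral>\<^sup>+x. f (T k x) \<partial>PL {1..k}) = (\<integral>\<^sup>+x. f x \<partial>PL {1..k})"
  proof (rule chain_pres[where T=T and S=S])
    show "T 0 x = x" if "x \<in> space (PL {1..k})" for x
      using that by (auto simp: T_def space_PiM PiE_def extensional_def fun_eq_iff)
    show "T (Suc n) x = S n (T n x)" if "n < k" for n x
      using that by (auto simp: T_def S_def shear_def fun_eq_iff hat_def xbar_Suc)
    show "S n \<in> measurable (PL {1..k}) (PL {1..k})" if "n < k" for n
      unfolding S_def using that by (intro shear_meas hat_meas) auto
    show "(\<integral>\<^sup>+x. g (S n x) \<partial>PL {1..k}) = (\<integral>\<^sup>+x. g x \<partial>PL {1..k})"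
      if "n < k" "g \<in> borel_measurable (PL {1..k})" for n g
      unfolding S_def using that by (intro shear_pres hat_meas) (auto simp: hat_def)
  qed (fact f)
  moreover have "T k x = Cm k x" for x by (auto simp: T_def Cm_def fun_eq_iff)
  ultimately show ?thesis by simp
qed

lemma Dm_Cm: assumes "x \<in> space (PL {1..k})" shows "Dm k (Cm k x) = x"
proof
  fix i
  show "Dm k (Cm k x) i = x i"
  proof (cases "i \<in> {1..k}")
    case True
    then obtain m where m: "i = Suc m" by (cases i) auto
    then show ?thesis using True by (auto simp: Dm_def Cm_def hat_def xbar_Suc)
  next
    case False
    then show ?thesis using assms by (auto simp: Dm_def space_PiM PiE_def extensional_def)
  qed
qed



lemma Dm_pres:
  assumes f: "f \<in> borel_measurable (PL {1..k})"
  shows "(\<integral>\<^sup>+x. f (Dm k x) \<partial>PL {1..k}) = (\<integral>\<^sup>+x. f x \<partial>PL {1..k})"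
proof -
  have m: "(\<lambda>x. f (Dm k x)) \<in> borel_measurable (PL {1..k})"
    using measurable_comp[OF Dm_meas f] by (simp add: comp_def)
  have "(\<integral>\<^sup>+x. f (Dm k x) \<partial>PL {1..k}) = (\<integral>\<^sup>+x. f (Dm k (Cm k x)) \<partial>PL {1..k})"
    using Cm_pres[OF m] by simp
  also have "\<dots> = (\<integral>\<^sup>+x. f x \<partial>PL {1..k})"
    by (intro nn_integral_cong) (simp add: Dm_Cm)
  finally show ?thesis .
qed

lemma Wm_pres:
  assumes f: "f \<in> borel_measurable (PL {1..k})" and a: "a \<le> k"
  shows "(\<integral>\<^sup>+x. f (Wm k a x) \<partial>PL {1..k}) = (\<integral>\<^sup>+x. f x \<partial>PL {1..k})"
proof (cases "a = 0")
  case True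
  then show ?thesis
    by (intro nn_integral_cong)
      (auto simp: Wm_def hat_def space_PiM PiE_def extensional_def fun_eq_iff intro!: arg_cong[where f=f])
next
  case False
  then have a1: "a \<in> {1..k}" using a by auto
  define V where "V n (y::nat\<Rightarrow>real) = (\<lambda>j\<in>{1..k}. if j \<le> n \<and> j \<noteq> a then y j - y a else y j)" for n y
  define S where "S n = (if Suc n = a then (\<lambda>z. z) else shear {1..k} (Suc n) 1 (\<lambda>z. - z a))" for n
  define Ng where "Ng = shear {1..k} a (-1) (\<lambda>_. 0)"
  have Ngm: "Ng \<in> measurable (PL {1..k}) (PL {1..k})"
    unfolding Ng_def using a1 by (intro shear_meas) auto
  have fNg: "(\<lambda>x. f (Ng x)) \<in> borel_measurable (PL {1..k})"
    using measurable_comp[OF Ngm f] by (simp add: comp_def)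
  have "(\<integral>\<^sup>+x. (\<lambda>z. f (Ng z)) (V k x) \<partial>PL {1..k}) = (\<integral>\<^sup>+x. (\<lambda>z. f (Ng z)) x \<partial>PL {1..k})"
  proof (rule chain_pres[where T=V and S=S])
    show "V 0 x = x" if "x \<in> space (PL {1..k})" for x
      using that by (auto simp: V_def space_PiM PiE_def extensional_def fun_eq_iff)
    show "V (Suc n) x = S n (V n x)" if "n < k" for n x
      using that a1 by (auto simp: V_def S_def shear_def fun_eq_iff)
    show "S n \<in> measurable (PL {1..k}) (PL {1..k})" if "n < k" for n
      unfolding S_def using that a1 by (auto intro!: shear_meas borel_measurable_uminus comp_meas)
    show "(\<integral>\<^sup>+x. g (S n x) \<partial>PL {1..k}) = (\<integral>\<^sup>+x. g x \<partial>PL {1..k})"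
      if "n < k" "g \<in> borel_measurable (PL {1..k})" for n g
    proof (cases "Suc n = a")
      case True then show ?thesis by (simp add: S_def)
    next
      case False
      then show ?thesis unfolding S_def using that a1
        by (simp, intro shear_pres borel_measurable_uminus comp_meas) auto
    qed
  qed (fact fNg)
  also have "\<dots> = (\<integral>\<^sup>+x. f x \<partial>PL {1..k})"
    unfolding Ng_def using a1 f by (intro shear_pres) auto
  moreover have "Ng (V k x) = Wm k a x" for x
    using a1 by (auto simp: Ng_def shear_def V_def Wm_def hat_def fun_eq_iff)
  ultimately show ?thesis by simp
qed

lemma Pm_pres:
  assumes f: "f \<in> borel_measurable (PL {1..k})" and r: "bij_betw r {1..k} {1..k}"
  shows "(\<integral>\<^sup>+x. f (Pm k r x) \<partial>PL {1..k}) = (\<integral>\<^sup>+x. f x \<partial>PL {1..k})"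
  unfolding Pm_def by (rule perm_pres[OF _ r f]) simp

definition Lt :: "nat \<Rightarrow> (nat \<Rightarrow> nat) \<Rightarrow> (nat \<Rightarrow> real) \<Rightarrow> nat \<Rightarrow> real" where
  "Lt k \<tau> x = (\<lambda>i\<in>{1..k}. xbar x (\<tau> i) - xbar x (\<tau> (i - 1)))"

definition rho :: "(nat \<Rightarrow> nat) \<Rightarrow> nat \<Rightarrow> nat" where
  "rho \<tau> i = (if \<tau> i = 0 then \<tau> 0 else \<tau> i)"

lemma rho_bij:
  assumes t: "\<tau> permutes {0..k}"
  shows "bij_betw (rho \<tau>) {1..k} {1..k}"
proof -
  have inj: "\<And>i j. \<tau> i = \<tau> j \<Longrightarrow> i = j" using permutes_inj[OF t] by (simp add: inj_def)
  have im: "\<And>i. i \<le> k \<Longrightarrow> \<tau> i \<le> k" using permutes_in_image[OF t] by auto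
  have sub: "rho \<tau> ` {1..k} \<subseteq> {1..k}"
  proof
    fix y assume "y \<in> rho \<tau> ` {1..k}"
    then obtain i where i: "i \<in> {1..k}" "y = rho \<tau> i" by auto
    show "y \<in> {1..k}"
    proof (cases "\<tau> i = 0")
      case True
      then have "\<tau> 0 \<noteq> 0" using i inj[of i 0] by auto
      then show ?thesis using True i im[of 0] by (simp add: rho_def)
    next
      case False
      then show ?thesis using i im[of i] by (simp add: rho_def)
    qed
  qed
  have "inj_on (rho \<tau>) {1..k}"
  proof (rule inj_onI)
    fix i j assume ij: "i \<in> {1..k}" "j \<in> {1..k}" "rho \<tau> i = rho \<tau> j"
    show "i = j"
    proof (cases "\<tau> i = 0"; cases "\<tau> j = 0")
      assume "\<tau> i = 0" "\<tau> j = 0" then show ?thesis using inj[of i j] by simp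
    next
      assume "\<tau> i = 0" "\<tau> j \<noteq> 0" then have "\<tau> 0 = \<tau> j" using ij by (simp add: rho_def)
      then show ?thesis using inj[of 0 j] ij by simp
    next
      assume "\<tau> i \<noteq> 0" "\<tau> j = 0" then have "\<tau> 0 = \<tau> i" using ij by (simp add: rho_def)
      then show ?thesis using inj[of 0 i] ij by simp
    next
      assume "\<tau> i \<noteq> 0" "\<tau> j \<noteq> 0" then show ?thesis using ij inj[of i j] by (simp add: rho_def)
    qed
  qed
  with sub show ?thesis
    by (simp add: bij_betw_def endo_inj_surj)
qed

lemma hat_Cm: "j \<le> k \<Longrightarrow> hat (Cm k x) j = xbar x j"
  by (auto simp: hat_def Cm_def)

lemma Lt_decomp:
  assumes t: "\<tau> permutes {0..k}" and x: "x \<in> space (PL {1..k})"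
  shows "Lt k \<tau> x = Dm k (Pm k (rho \<tau>) (Wm k (\<tau> 0) (Cm k x)))"
proof -
  have inj: "inj \<tau>" using t by (rule permutes_inj)
  have im: "\<And>i. i \<le> k \<Longrightarrow> \<tau> i \<le> k" using permutes_in_image[OF t] by auto
  have H: "hat (Pm k (rho \<tau>) (Wm k (\<tau> 0) (Cm k x))) j = xbar x (\<tau> j) - xbar x (\<tau> 0)" if j: "j \<le> k" for j
  proof (cases "j = 0")
    case True then show ?thesis by (simp add: hat_def)
  next
    case False
    show ?thesis
    proof (cases "\<tau> j = 0")
      case True
      then have a0: "\<tau> 0 \<noteq> 0" using False injD[OF inj, of j 0] by auto
      show ?thesis using True False j a0 im[of 0]
        by (simp add: hat_def Pm_def rho_def Wm_def Cm_def)
    next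
      case ne: False
      then have "\<tau> j \<noteq> \<tau> 0" using False injD[OF inj, of j 0] by auto
      then show ?thesis using ne False j im[of j] im[of 0]
        by (simp add: hat_def Pm_def rho_def Wm_def Cm_def)
    qed
  qed
  show ?thesis
  proof
    fix i show "Lt k \<tau> x i = Dm k (Pm k (rho \<tau>) (Wm k (\<tau> 0) (Cm k x))) i"
      using H[of i] H[of "i - 1"] by (auto simp: Lt_def Dm_def)
  qed
qed

lemma Lt_pres:
  assumes t: "\<tau> permutes {0..k}" and f: "f \<in> borel_measurable (PL {1..k})"
  shows "(\<integral>\<^sup>+x. f (Lt k \<tau> x) \<partial>PL {1..k}) = (\<integral>\<^sup>+x. f x \<partial>PL {1..k})"
proof -
  have a: "\<tau> 0 \<le> k" using permutes_in_image[OF t, of 0] by auto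
  have rb: "bij_betw (rho \<tau>) {1..k} {1..k}" by (rule rho_bij[OF t])
  have rm: "rho \<tau> \<in> {1..k} \<rightarrow> {1..k}" using rb by (auto simp: bij_betw_def)
  have f1: "(\<lambda>x. f (Dm k x)) \<in> borel_measurable (PL {1..k})"
    using measurable_comp[OF Dm_meas f] by (simp add: comp_def)
  have f2: "(\<lambda>x. f (Dm k (Pm k (rho \<tau>) x))) \<in> borel_measurable (PL {1..k})"
    using measurable_comp[OF Pm_meas[OF rm] f1] by (simp add: comp_def)
  have f3: "(\<lambda>x. f (Dm k (Pm k (rho \<tau>) (Wm k (\<tau> 0) x)))) \<in> borel_measurable (PL {1..k})"
    using measurable_comp[OF Wm_meas[OF a] f2] by (simp add: comp_def)
  have "(\<integral>\<^sup>+x. f (Lt k \<tau> x) \<partial>PL {1..k}) = (\<integral>\<^sup>+x. f (Dm k (Pm k (rho \<tau>) (Wm k (\<tau> 0) (Cm k x)))) \<partial>PL {1..k})"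
    using t by (intro nn_integral_cong) (simp add: Lt_decomp)
  also have "\<dots> = (\<integral>\<^sup>+x. f (Dm k (Pm k (rho \<tau>) (Wm k (\<tau> 0) x))) \<partial>PL {1..k})"
    by (rule Cm_pres[OF f3])
  also have "\<dots> = (\<integral>\<^sup>+x. f (Dm k (Pm k (rho \<tau>) x)) \<partial>PL {1..k})"
    by (rule Wm_pres[OF f2 a])
  also have "\<dots> = (\<integral>\<^sup>+x. f (Dm k x) \<partial>PL {1..k})"
    by (rule Pm_pres[OF f1 rb])
  also have "\<dots> = (\<integral>\<^sup>+x. f x \<partial>PL {1..k})"
    by (rule Dm_pres[OF f])
  finally show ?thesis .
qed



lemma xbar_less: "i < j \<Longrightarrow> (\<forall>m\<in>{1..j}. 0 < x m) \<Longrightarrow> xbar x i < xbar x j"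
proof (induction j)
  case 0 then show ?case by simp
next
  case (Suc j)
  have "x (Suc j) > 0" using Suc.prems by auto
  moreover have "xbar x i \<le> xbar x j"
    using Suc by (cases "i = j") (auto simp: less_Suc_eq)
  ultimately show ?case by (simp add: xbar_Suc)
qed

lemma smono_iff: "strict_mono_on {0..k} (xbar x) \<longleftrightarrow> (\<forall>i\<in>{1..k}. 0 < x i)"
proof
  assume s: "strict_mono_on {0..k} (xbar x)"
  show "\<forall>i\<in>{1..k}. 0 < x i"
  proof
    fix i assume i: "i \<in> {1..k}"
    then obtain m where m: "i = Suc m" by (cases i) auto
    have "xbar x m < xbar x (Suc m)" using s i m by (intro strict_mono_onD[OF s]) auto
    then show "0 < x i" using m by (simp add: xbar_Suc)
  qed
next
  assume p: "\<forall>i\<in>{1..k}. 0 < x i"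
  show "strict_mono_on {0..k} (xbar x)"
  proof (rule strict_mono_onI)
    fix i j assume "i \<in> {0..k}" "j \<in> {0..k}" "i < j"
    then show "xbar x i < xbar x j" using p by (intro xbar_less) auto
  qed
qed

lemma xbar_Lt: "i \<le> k \<Longrightarrow> xbar (Lt k \<tau> x) i = xbar x (\<tau> i) - xbar x (\<tau> 0)"
proof (induction i)
  case 0 then show ?case by simp
next
  case (Suc i)
  then show ?case by (simp add: xbar_Suc Lt_def)
qed

definition Ev :: "nat \<Rightarrow> (nat \<Rightarrow> nat) \<Rightarrow> (nat \<Rightarrow> real) \<Rightarrow> bool" where
  "Ev k \<tau> d = strict_mono_on {0..k} (\<lambda>j. xbar d (inv \<tau> j))"

lemma Ev_Lt:
  assumes t: "\<tau> permutes {0..k}"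
  shows "Ev k \<tau> (Lt k \<tau> x) \<longleftrightarrow> (\<forall>i\<in>{1..k}. 0 < x i)"
proof -
  have "xbar (Lt k \<tau> x) (inv \<tau> j) = xbar x j - xbar x (\<tau> 0)" if "j \<in> {0..k}" for j
  proof -
    have "inv \<tau> j \<in> {0..k}" using permutes_in_image[OF permutes_inv[OF t]] that by auto
    then show ?thesis using xbar_Lt[of "inv \<tau> j" k \<tau> x] permutes_inverses(1)[OF t] by simp
  qed
  then have "Ev k \<tau> (Lt k \<tau> x) \<longleftrightarrow> strict_mono_on {0..k} (xbar x)"
    unfolding Ev_def strict_mono_on_def by auto
  then show ?thesis by (simp add: smono_iff)
qed

lemma sort_perm_shift:
  fixes h :: "nat \<Rightarrow> real"
  assumes t: "\<tau> permutes {0..k}" and s: "strict_mono_on {0..k} h"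
  shows "sort (map (\<lambda>j. h (\<tau> j) - c) [0..<Suc k]) = map (\<lambda>j. h j - c) [0..<Suc k]"
proof (rule properties_for_sort)
  have inj: "inj_on \<tau> {0..<Suc k}" using permutes_inj[OF t] by (auto simp: inj_on_def inj_def)
  have im: "\<tau> ` {0..<Suc k} = {0..<Suc k}" using permutes_image[OF t] by (simp add: atLeastLessThanSuc_atLeastAtMost)
  have "mset (map (\<lambda>j. h (\<tau> j) - c) [0..<Suc k]) = image_mset (\<lambda>j. h j - c) (image_mset \<tau> (mset_set {0..<Suc k}))"
    by (simp add: image_mset.compositionality o_def mset_map del: upt_Suc)
  also have "\<dots> = image_mset (\<lambda>j. h j - c) (mset_set {0..<Suc k})"
    using image_mset_mset_set[OF inj] im by simp
  finally show "mset (map (\<lambda>j. h j - c) [0..<Suc k]) = mset (map (\<lambda>j. h (\<tau> j) - c) [0..<Suc k])"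
    by (simp add: mset_map del: upt_Suc)
  show "sorted (map (\<lambda>j. h j - c) [0..<Suc k])"
    unfolding sorted_iff_nth_mono
  proof (intro allI impI)
    fix i j assume "i \<le> j" "j < length (map (\<lambda>j. h j - c) [0..<Suc k])"
    then show "map (\<lambda>j. h j - c) [0..<Suc k] ! i \<le> map (\<lambda>j. h j - c) [0..<Suc k] ! j"
      using strict_mono_onD[OF s, of i j] by (cases "i = j") (auto simp del: upt_Suc)
  qed
qed

lemma Gm_Lt:
  assumes t: "\<tau> permutes {0..k}" and x: "x \<in> extensional {1..k}" and p: "\<forall>i\<in>{1..k}. 0 < x i"
  shows "gaps_seq k (xbar (Lt k \<tau> x)) = x"
proof -
  have s: "strict_mono_on {0..k} (xbar x)" using p by (simp add: smono_iff)
  have "map (xbar (Lt k \<tau> x)) [0..<Suc k] = map (\<lambda>j. xbar x (\<tau> j) - xbar x (\<tau> 0)) [0..<Suc k]"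
    by (intro map_cong refl) (simp add: xbar_Lt del: upt_Suc)
  then have e: "sort (map (xbar (Lt k \<tau> x)) [0..<Suc k]) = map (\<lambda>j. xbar x j - xbar x (\<tau> 0)) [0..<Suc k]"
    using sort_perm_shift[OF t s, of "xbar x (\<tau> 0)"] by (simp only:)
  show ?thesis
  proof
    fix i show "gaps_seq k (xbar (Lt k \<tau> x)) i = x i"
    proof (cases "i \<in> {1..k}")
      case True
      then obtain m where m: "i = Suc m" by (cases i) auto
      have l: "i < length [0..<Suc k]" "i - 1 < length [0..<Suc k]" using True by auto
      show ?thesis using True m
        by (simp add: gaps_seq_def e nth_map[OF l(1)] nth_map[OF l(2)] xbar_Suc del: upt_Suc)
    next
      case False then show ?thesis using x by (auto simp: gaps_seq_def extensional_def)
    qed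
  qed
qed



lemma Ev_inj:
  assumes t: "\<tau> permutes {0..k}" and e: "Ev k \<tau> d"
  shows "inj_on (xbar d) {0..k}"
proof (rule inj_onI)
  fix a b assume ab: "a \<in> {0..k}" "b \<in> {0..k}" "xbar d a = xbar d b"
  have injs: "inj_on (\<lambda>j. xbar d (inv \<tau> j)) {0..k}"
    using e unfolding Ev_def by (rule strict_mono_on_imp_inj_on)
  have ta: "\<tau> a \<in> {0..k}" "\<tau> b \<in> {0..k}" using permutes_in_image[OF t] ab by auto
  have "xbar d (inv \<tau> (\<tau> a)) = xbar d (inv \<tau> (\<tau> b))"
    using ab permutes_inverses(2)[OF t] by simp
  then have "\<tau> a = \<tau> b" using injs ta by (auto dest: inj_onD)
  then show "a = b" using permutes_inj[OF t] by (auto dest: injD)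
qed

lemma Ev_unique:
  assumes t1: "\<tau>1 permutes {0..k}" and e1: "Ev k \<tau>1 d"
    and t2: "\<tau>2 permutes {0..k}" and e2: "Ev k \<tau>2 d"
  shows "\<tau>1 = \<tau>2"
proof -
  have inj: "inj_on (xbar d) {0..k}" by (rule Ev_inj[OF t1 e1])
  define s1 where "s1 = inv \<tau>1"
  define s2 where "s2 = inv \<tau>2"
  have p1: "s1 permutes {0..k}" "s2 permutes {0..k}"
    unfolding s1_def s2_def using t1 t2 by (auto intro: permutes_inv)
  have L: "map (\<lambda>j. xbar d (s1 j)) [0..<Suc k] = map (\<lambda>j. xbar d (s2 j)) [0..<Suc k]"
  proof (rule sorted_distinct_set_unique)
    have sm: "strict_mono_on {0..k} (\<lambda>j. xbar d (s j))" "s permutes {0..k}"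
      if "s = s1 \<or> s = s2" for s
      using that e1 e2 p1 unfolding Ev_def s1_def s2_def by auto
    have srt: "sorted_wrt (<) (map (\<lambda>j. xbar d (s j)) [0..<Suc k])" if "s = s1 \<or> s = s2" for s
      unfolding sorted_wrt_iff_nth_less
      using strict_mono_onD[OF sm(1)[OF that]] by (auto simp del: upt_Suc)
    show "sorted (map (\<lambda>j. xbar d (s1 j)) [0..<Suc k])" "distinct (map (\<lambda>j. xbar d (s1 j)) [0..<Suc k])"
      "sorted (map (\<lambda>j. xbar d (s2 j)) [0..<Suc k])" "distinct (map (\<lambda>j. xbar d (s2 j)) [0..<Suc k])"
      using srt[of s1] srt[of s2] by (auto simp: strict_sorted_iff simp del: upt_Suc)
    have "set (map (\<lambda>j. xbar d (s j)) [0..<Suc k]) = xbar d ` {0..k}" if "s permutes {0..k}" for s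
    proof -
      have "set (map (\<lambda>j. xbar d (s j)) [0..<Suc k]) = xbar d ` (s ` {0..k})"
        by (auto simp: atLeastLessThanSuc_atLeastAtMost image_image simp del: upt_Suc)
      then show ?thesis using permutes_image[OF that] by simp
    qed
    then show "set (map (\<lambda>j. xbar d (s1 j)) [0..<Suc k]) = set (map (\<lambda>j. xbar d (s2 j)) [0..<Suc k])"
      using p1 by simp
  qed
  have "s1 = s2"
  proof
    fix j show "s1 j = s2 j"
    proof (cases "j \<in> {0..k}")
      case True
      then have "xbar d (s1 j) = xbar d (s2 j)"
        using arg_cong[OF L, of "\<lambda>l. l ! j"] by (simp del: upt_Suc)
      moreover have "s1 j \<in> {0..k}" "s2 j \<in> {0..k}" using True permutes_in_image[OF p1(1)] permutes_in_image[OF p1(2)] by auto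
      ultimately show ?thesis using inj by (auto dest: inj_onD)
    next
      case False then show ?thesis using p1 by (simp add: permutes_not_in)
    qed
  qed
  then show ?thesis unfolding s1_def s2_def
    using permutes_inv_inv[OF t1] permutes_inv_inv[OF t2] by metis
qed

lemma Ev_exists:
  assumes inj: "inj_on (xbar d) {0..k}"
  shows "\<exists>\<tau>. \<tau> permutes {0..k} \<and> Ev k \<tau> d"
proof -
  let ?S = "{0..k}"
  define L where "L = sorted_list_of_set (xbar d ` ?S)"
  have lenL: "length L = Suc k" unfolding L_def using card_image[OF inj] by simp
  have setL: "set L = xbar d ` ?S" unfolding L_def by simp
  have sL: "sorted_wrt (<) L" unfolding L_def by (rule strict_sorted_list_of_set)
  have dL: "distinct L" using sL by (simp add: strict_sorted_iff)
  define s where "s j = (if j \<in> ?S then the_inv_into ?S (xbar d) (L ! j) else j)" for j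
  have Lin: "L ! j \<in> xbar d ` ?S" if "j \<in> ?S" for j using that lenL setL nth_mem[of j L] by auto
  have sS: "s j \<in> ?S" if "j \<in> ?S" for j
    using that the_inv_into_into[OF inj Lin[OF that] subset_refl] by (simp add: s_def)
  have ys: "xbar d (s j) = L ! j" if "j \<in> ?S" for j
    using that Lin[OF that] inj by (simp add: s_def f_the_inv_into_f)
  have sinj: "inj_on s ?S"
  proof (rule inj_onI)
    fix i j assume ij: "i \<in> ?S" "j \<in> ?S" "s i = s j"
    then have "L ! i = L ! j" using ys by metis
    then show "i = j" using dL ij lenL by (simp add: nth_eq_iff_index_eq)
  qed
  have sp: "s permutes ?S"
  proof (rule bij_imp_permutes)
    have "s ` ?S = ?S" by (rule endo_inj_surj) (use sS sinj in auto)
    then show "bij_betw s ?S ?S" using sinj by (simp add: bij_betw_def)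
    show "s x = x" if "x \<notin> ?S" for x using that by (simp add: s_def)
  qed
  have sm: "strict_mono_on ?S (\<lambda>j. xbar d (s j))"
  proof (rule strict_mono_onI)
    fix i j assume "i \<in> ?S" "j \<in> ?S" "i < j"
    then show "xbar d (s i) < xbar d (s j)" using ys sorted_wrt_nth_less[OF sL, of i j] lenL by auto
  qed
  show ?thesis
  proof (intro exI conjI)
    show "inv s permutes ?S" using sp by (rule permutes_inv)
    show "Ev k (inv s) d" unfolding Ev_def using sm permutes_inv_inv[OF sp] by simp
  qed
qed


lemma sum_Ev:
  "(\<Sum>\<tau> | \<tau> permutes {0..k}. (if Ev k \<tau> d then 1 else 0 :: ennreal)) = (if inj_on (xbar d) {0..k} then 1 else 0)"
proof (cases "inj_on (xbar d) {0..k}")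
  case True
  then obtain \<tau>0 where t0: "\<tau>0 permutes {0..k}" "Ev k \<tau>0 d" using Ev_exists by blast
  have "(\<Sum>\<tau> | \<tau> permutes {0..k}. (if Ev k \<tau> d then 1 else 0 :: ennreal))
      = (\<Sum>\<tau> | \<tau> permutes {0..k}. (if \<tau> = \<tau>0 then 1 else 0 :: ennreal))"
  proof (rule sum.cong[OF refl])
    fix \<tau> assume "\<tau> \<in> {\<tau>. \<tau> permutes {0..k}}"
    then have "\<tau> permutes {0..k}" by simp
    then show "(if Ev k \<tau> d then 1 else 0 :: ennreal) = (if \<tau> = \<tau>0 then 1 else 0)"
    proof (cases "Ev k \<tau> d")
      case True
      then have "\<tau> = \<tau>0" using Ev_unique[of \<tau> k d \<tau>0] t0 \<open>\<tau> permutes {0..k}\<close> by blast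
      then show ?thesis using True by simp
    next
      case False
      then have "\<tau> \<noteq> \<tau>0" using t0(2) by blast
      then show ?thesis using False by simp
    qed
  qed
  also have "\<dots> = 1"
    using sum.delta[OF finite_permutations[of "{0..k}"], of \<tau>0 "\<lambda>_. 1::ennreal"] t0(1) by simp
  finally show ?thesis using True by simp
next
  case False
  have "(if Ev k \<tau> d then 1 else 0 :: ennreal) = 0" if "\<tau> \<in> {\<tau>. \<tau> permutes {0..k}}" for \<tau>
  proof -
    have "\<not> Ev k \<tau> d" using Ev_inj[of \<tau> k d] that False by blast
    then show ?thesis by simp
  qed
  then show ?thesis using False by (simp add: sum.neutral)
qed



lemma sorted_nth_le:
  fixes xs :: "real list"
  shows "sorted xs \<Longrightarrow> i < length xs \<Longrightarrow> (xs ! i \<le> a \<longleftrightarrow> i < length (filter (\<lambda>v. v \<le> a) xs))"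
proof (induction xs arbitrary: i)
  case Nil then show ?case by simp
next
  case (Cons x xs)
  have allx: "\<forall>v\<in>set xs. x \<le> v" using Cons.prems(1) by simp
  show ?case
  proof (cases "x \<le> a")
    case True
    then show ?thesis using Cons by (cases i) auto
  next
    case False
    then have "filter (\<lambda>v. v \<le> a) xs = []" using allx by (auto simp: filter_empty_conv)
    moreover have "i > 0 \<Longrightarrow> \<not> (x # xs) ! i \<le> a" using allx False Cons.prems(2)
      by (cases i) (auto dest!: nth_mem[of _ xs])
    ultimately show ?thesis using False by (cases i) auto
  qed
qed

lemma length_filter_sort: "length (filter P (sort xs)) = length (filter P xs)"
proof -
  have "mset (filter P (sort xs)) = mset (filter P xs)" by simp
  then show ?thesis by (metis size_mset)
qed

lemma length_filter_map_upt:
  "real (length (filter (\<lambda>v. v \<le> a) (map l [0..<n]))) = (\<Sum>j<n. if l j \<le> (a::real) then 1 else 0)"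
  by (induction n) auto

lemma os_meas:
  fixes f :: "nat \<Rightarrow> 'a \<Rightarrow> real"
  assumes f: "\<And>j. j \<le> k \<Longrightarrow> f j \<in> borel_measurable N" and i: "i \<le> k"
  shows "(\<lambda>w. sort (map (\<lambda>j. f j w) [0..<Suc k]) ! i) \<in> borel_measurable N"
proof (subst borel_measurable_iff_le, intro allI)
  fix a :: real
  have eq: "{w \<in> space N. sort (map (\<lambda>j. f j w) [0..<Suc k]) ! i \<le> a}
      = {w \<in> space N. real i < (\<Sum>j<Suc k. if f j w \<le> a then 1 else 0)}"
  proof -
    have "sort (map (\<lambda>j. f j w) [0..<Suc k]) ! i \<le> a \<longleftrightarrow> real i < (\<Sum>j<Suc k. if f j w \<le> a then 1 else 0)" for w
    proof -
      have "sort (map (\<lambda>j. f j w) [0..<Suc k]) ! i \<le> a \<longleftrightarrow>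
          i < length (filter (\<lambda>v. v \<le> a) (sort (map (\<lambda>j. f j w) [0..<Suc k])))"
        using i by (intro sorted_nth_le) (auto simp del: upt_Suc)
      also have "\<dots> \<longleftrightarrow> real i < real (length (filter (\<lambda>v. v \<le> a) (map (\<lambda>j. f j w) [0..<Suc k])))"
        by (simp add: length_filter_sort del: upt_Suc)
      also have "\<dots> \<longleftrightarrow> real i < (\<Sum>j<Suc k. if f j w \<le> a then 1 else 0)"
        by (simp only: length_filter_map_upt)
      finally show ?thesis .
    qed
    then show ?thesis by blast
  qed
  have m: "(\<lambda>w. \<Sum>j<Suc k. if f j w \<le> a then 1 else 0 :: real) \<in> borel_measurable N"
  proof (rule borel_measurable_sum)
    fix j assume "j \<in> {..<Suc k}"
    then have [measurable]: "f j \<in> borel_measurable N" using f by auto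
    show "(\<lambda>w. if f j w \<le> a then 1 else 0 :: real) \<in> borel_measurable N" by measurable
  qed
  show "{w \<in> space N. sort (map (\<lambda>j. f j w) [0..<Suc k]) ! i \<le> a} \<in> sets N"
    unfolding eq using m by measurable
qed

lemma gaps_meas:
  fixes f :: "nat \<Rightarrow> 'a \<Rightarrow> real"
  assumes f: "\<And>j. j \<le> k \<Longrightarrow> f j \<in> borel_measurable N"
  shows "(\<lambda>w. gaps_seq k (\<lambda>j. f j w)) \<in> measurable N (PL {1..k})"
  unfolding gaps_seq_def Let_def
proof (rule measurable_restrict)
  fix i assume i: "i \<in> {1..k}"
  have "(\<lambda>w. sort (map (\<lambda>j. f j w) [0..<Suc k]) ! i - sort (map (\<lambda>j. f j w) [0..<Suc k]) ! (i - 1)) \<in> borel_measurable N"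
    using i by (intro borel_measurable_diff os_meas f) auto
  then show "(\<lambda>w. sort (map (\<lambda>j. f j w) [0..<Suc k]) ! i - sort (map (\<lambda>j. f j w) [0..<Suc k]) ! (i - 1)) \<in> measurable N lborel"
    by simp
qed

lemma Gm_meas: "(\<lambda>d. gaps_seq k (xbar d)) \<in> measurable (PL {1..k}) (PL {1..k})"
  using gaps_meas[of k "\<lambda>j d. xbar d j" "PL {1..k}"] xbar_meas by simp

lemma Ev_meas:
  assumes t: "\<tau> permutes {0..k}"
  shows "(\<lambda>d. if Ev k \<tau> d then 1 else 0 :: ennreal) \<in> borel_measurable (PL {1..k})"
proof -
  have im: "inv \<tau> j \<le> k" if "j \<le> k" for j
    using permutes_in_image[OF permutes_inv[OF t], of j] that by auto
  have [measurable]: "(\<lambda>d. xbar d (inv \<tau> j)) \<in> borel_measurable (PL {1..k})" if "j \<in> {0..k}" for j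
    using that im by (intro xbar_meas) auto
  have e: "Ev k \<tau> d \<longleftrightarrow> (\<forall>i\<in>{0..k}. \<forall>j\<in>{0..k}. i < j \<longrightarrow> xbar d (inv \<tau> i) < xbar d (inv \<tau> j))" for d
    unfolding Ev_def strict_mono_on_def by blast
  have "{d \<in> space (PL {1..k}). Ev k \<tau> d} \<in> sets (PL {1..k})"
    unfolding e by measurable
  then have [measurable]: "Measurable.pred (PL {1..k}) (Ev k \<tau>)" by (simp add: pred_def)
  show ?thesis by measurable
qed

lemma null_coord:
  assumes I: "finite I" "b \<in> I" and c[measurable]: "c \<in> borel_measurable (PL I)"
    and cind: "\<And>x y. c (x(b:=y)) = c x"
  shows "{x \<in> space (PL I). x b + c x = 0} \<in> null_sets (PL I)"
proof -
  define J where "J = I - {b}"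
  have IJ: "I = insert b J" "b \<notin> J" "finite J" using I by (auto simp: J_def)
  have [measurable]: "(\<lambda>x. x b) \<in> borel_measurable (PL I)" using comp_meas[OF I(2)] .
  have S: "{x \<in> space (PL I). x b + c x = 0} \<in> sets (PL I)" by measurable
  have "emeasure (PL I) {x \<in> space (PL I). x b + c x = 0} = (\<integral>\<^sup>+x. indicator {x \<in> space (PL I). x b + c x = 0} x \<partial>PL I)"
    using S by simp
  also have "\<dots> = (\<integral>\<^sup>+ x. (\<integral>\<^sup>+ y. indicator {x \<in> space (PL I). x b + c x = 0} (x(b:=y)) \<partial>lborel) \<partial>PL J)"
    using PSF.product_nn_integral_insert[OF IJ(3,2), of "indicator {x \<in> space (PL I). x b + c x = 0}"] S IJ(1)
    by simp
  also have "\<dots> = (\<integral>\<^sup>+ x. (\<integral>\<^sup>+ y. indicator {- c x} y \<partial>lborel) \<partial>PL J)"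
  proof (rule nn_integral_cong)
    fix x assume x: "x \<in> space (PL J)"
    have "x(b:=y) \<in> space (PL I)" for y
      using x IJ by (auto simp: space_PiM PiE_def extensional_def)
    then show "(\<integral>\<^sup>+ y. indicator {x \<in> space (PL I). x b + c x = 0} (x(b:=y)) \<partial>lborel) = (\<integral>\<^sup>+ y. indicator {- c x} y \<partial>lborel)"
      by (intro nn_integral_cong) (auto simp: cind indicator_def)
  qed
  also have "\<dots> = 0" by simp
  finally show ?thesis using S by (simp add: null_sets_def)
qed

lemma AE_inj: "AE d in PL {1..k}. inj_on (xbar d) {0..k}"
proof -
  have "AE d in PL {1..k}. \<forall>b\<in>{0..k}. \<forall>a\<in>{0..k}. a < b \<longrightarrow> xbar d a \<noteq> xbar d b"
  proof (intro AE_finite_allI finite_atLeastAtMost)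
    fix b a assume b: "b \<in> {0..k}" and a: "a \<in> {0..k}"
    show "AE d in PL {1..k}. a < b \<longrightarrow> xbar d a \<noteq> xbar d b"
    proof (cases "a < b")
      case False then show ?thesis by simp
    next
      case True
      then obtain m where m: "b = Suc m" by (cases b) auto
      have bI: "b \<in> {1..k}" using b m by auto
      have cm: "(\<lambda>x. xbar x m - xbar x a) \<in> borel_measurable (PL {1..k})"
        using b a m by (intro borel_measurable_diff xbar_meas) auto
      have xu: "xbar (x(b:=y)) j = xbar x j" if "j < b" for x y j
        using that unfolding xbar_def by (intro sum.cong) auto
      have ci: "xbar (x(b:=y)) m - xbar (x(b:=y)) a = xbar x m - xbar x a" for x y
        using xu[of m] xu[of a] True m by simp
      show ?thesis
      proof (rule AE_I'[OF null_coord[OF _ bI cm ci]])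
        show "{d \<in> space (PL {1..k}). \<not> (a < b \<longrightarrow> xbar d a \<noteq> xbar d b)}
           \<subseteq> {x \<in> space (PL {1..k}). x b + (xbar x m - xbar x a) = 0}"
          using m by (auto simp: xbar_Suc)
      qed simp
    qed
  qed
  then show ?thesis
  proof (rule AE_mp, intro AE_I2 impI)
    fix d assume H: "\<forall>b\<in>{0..k}. \<forall>a\<in>{0..k}. a < b \<longrightarrow> xbar d a \<noteq> xbar d b"
    show "inj_on (xbar d) {0..k}"
    proof (rule inj_onI)
      fix a b assume "a \<in> {0..k}" "b \<in> {0..k}" "xbar d a = xbar d b"
      then show "a = b" using H by (metis linorder_neqE_nat)
    qed
  qed
qed



lemma prod_bool_ennreal:
  "finite A \<Longrightarrow> (\<Prod>i\<in>A. if P i then 1 else 0 :: ennreal) = (if \<forall>i\<in>A. P i then 1 else 0)"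
  by (induction A rule: finite_induct) auto

lemma Lt_meas:
  assumes t: "\<tau> permutes {0..k}"
  shows "Lt k \<tau> \<in> measurable (PL {1..k}) (PL {1..k})"
  unfolding Lt_def
proof (rule measurable_restrict)
  fix i assume i: "i \<in> {1..k}"
  have "\<tau> i \<le> k" "\<tau> (i - 1) \<le> k" using permutes_in_image[OF t, of i] permutes_in_image[OF t, of "i - 1"] i by auto
  then have "(\<lambda>x. xbar x (\<tau> i) - xbar x (\<tau> (i - 1))) \<in> borel_measurable (PL {1..k})"
    by (intro borel_measurable_diff xbar_meas)
  then show "(\<lambda>x. xbar x (\<tau> i) - xbar x (\<tau> (i - 1))) \<in> measurable (PL {1..k}) lborel" by simp
qed

lemma main_analytic:
  assumes F[measurable]: "F \<in> borel_measurable (PL {1..k})" and h[measurable]: "h \<in> borel_measurable (PL {1..k})"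
  shows "(\<integral>\<^sup>+d. h (gaps_seq k (xbar d)) * F d \<partial>PL {1..k})
       = (\<integral>\<^sup>+x. h x * (\<Sum>\<tau> | \<tau> permutes {0..k}. F (Lt k \<tau> x) * (\<Prod>i=1..k. if x i > 0 then 1 else 0)) \<partial>PL {1..k})"
proof -
  let ?P = "{\<tau>. \<tau> permutes {0..k}}"
  have finP: "finite ?P" by (rule finite_permutations) simp
  note Gm_meas[measurable]
  have hG[measurable]: "(\<lambda>d. h (gaps_seq k (xbar d))) \<in> borel_measurable (PL {1..k})"
    using measurable_comp[OF Gm_meas h] by (simp add: comp_def)
  have pos[measurable]: "(\<lambda>x. \<Prod>i=1..k. if x i > 0 then 1 else 0 :: ennreal) \<in> borel_measurable (PL {1..k})"
  proof (rule borel_measurable_prod_ennreal)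
    fix i assume "i \<in> {1..k}"
    then have [measurable]: "(\<lambda>x. x i) \<in> borel_measurable (PL {1..k})" by (rule comp_meas)
    show "(\<lambda>x. if x i > 0 then 1 else 0 :: ennreal) \<in> borel_measurable (PL {1..k})" by measurable
  qed
  define H where "H \<tau> d = h (gaps_seq k (xbar d)) * F d * (if Ev k \<tau> d then 1 else 0)" for \<tau> d
  have Hm: "H \<tau> \<in> borel_measurable (PL {1..k})" if "\<tau> \<in> ?P" for \<tau>
  proof -
    have [measurable]: "(\<lambda>d. if Ev k \<tau> d then 1 else 0 :: ennreal) \<in> borel_measurable (PL {1..k})"
      using Ev_meas[of \<tau> k] that by simp
    show ?thesis unfolding H_def by measurable
  qed
  have trm: "(\<integral>\<^sup>+x. h x * (F (Lt k \<tau> x) * (\<Prod>i=1..k. if x i > 0 then 1 else 0)) \<partial>PL {1..k})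
      = (\<integral>\<^sup>+d. H \<tau> d \<partial>PL {1..k})" if t: "\<tau> \<in> ?P" for \<tau>
  proof -
    have tp: "\<tau> permutes {0..k}" using t by simp
    have "(\<integral>\<^sup>+x. h x * (F (Lt k \<tau> x) * (\<Prod>i=1..k. if x i > 0 then 1 else 0)) \<partial>PL {1..k})
        = (\<integral>\<^sup>+x. H \<tau> (Lt k \<tau> x) \<partial>PL {1..k})"
    proof (rule nn_integral_cong)
      fix x assume x: "x \<in> space (PL {1..k})"
      then have xe: "x \<in> extensional {1..k}" by (simp add: space_PiM PiE_def)
      show "h x * (F (Lt k \<tau> x) * (\<Prod>i=1..k. if x i > 0 then 1 else 0)) = H \<tau> (Lt k \<tau> x)"
      proof (cases "\<forall>i\<in>{1..k}. 0 < x i")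
        case True
        then show ?thesis using Ev_Lt[OF tp, of x] Gm_Lt[OF tp xe True]
          by (simp add: H_def prod_bool_ennreal mult.commute)
      next
        case False
        then have "\<not> Ev k \<tau> (Lt k \<tau> x)" "\<not> (\<forall>i\<in>{1..k}. 0 < x i)" using Ev_Lt[OF tp, of x] by auto
        then show ?thesis by (simp only: H_def prod_bool_ennreal finite_atLeastAtMost if_False mult_zero_right)
      qed
    qed
    also have "\<dots> = (\<integral>\<^sup>+d. H \<tau> d \<partial>PL {1..k})"
      by (rule Lt_pres[OF tp Hm[OF t]])
    finally show ?thesis .
  qed
  have "(\<integral>\<^sup>+x. h x * (\<Sum>\<tau>\<in>?P. F (Lt k \<tau> x) * (\<Prod>i=1..k. if x i > 0 then 1 else 0)) \<partial>PL {1..k})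
      = (\<integral>\<^sup>+x. (\<Sum>\<tau>\<in>?P. h x * (F (Lt k \<tau> x) * (\<Prod>i=1..k. if x i > 0 then 1 else 0))) \<partial>PL {1..k})"
    by (simp add: sum_distrib_left)
  also have "\<dots> = (\<Sum>\<tau>\<in>?P. (\<integral>\<^sup>+x. h x * (F (Lt k \<tau> x) * (\<Prod>i=1..k. if x i > 0 then 1 else 0)) \<partial>PL {1..k}))"
  proof (rule nn_integral_sum)
    fix \<tau> assume t: "\<tau> \<in> ?P"
    have [measurable]: "Lt k \<tau> \<in> measurable (PL {1..k}) (PL {1..k})" using t Lt_meas by simp
    show "(\<lambda>x. h x * (F (Lt k \<tau> x) * (\<Prod>i=1..k. if x i > 0 then 1 else 0))) \<in> borel_measurable (PL {1..k})"
      by measurable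
  qed
  also have "\<dots> = (\<Sum>\<tau>\<in>?P. (\<integral>\<^sup>+d. H \<tau> d \<partial>PL {1..k}))"
    using trm by (rule sum.cong[OF refl])
  also have "\<dots> = (\<integral>\<^sup>+d. (\<Sum>\<tau>\<in>?P. H \<tau> d) \<partial>PL {1..k})"
    by (rule nn_integral_sum[symmetric]) (rule Hm)
  also have "\<dots> = (\<integral>\<^sup>+d. h (gaps_seq k (xbar d)) * F d * (if inj_on (xbar d) {0..k} then 1 else 0) \<partial>PL {1..k})"
    by (simp add: H_def sum_distrib_left[symmetric] sum_Ev)
  also have "\<dots> = (\<integral>\<^sup>+d. h (gaps_seq k (xbar d)) * F d \<partial>PL {1..k})"
    by (rule nn_integral_cong_AE) (use AE_inj[of k] in \<open>auto elim!: AE_mp\<close>)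
  finally show ?thesis by simp
qed



lemma gaps_sort_eq:
  assumes "sort (map l [0..<Suc k]) = sort (map l' [0..<Suc k])"
  shows "gaps_seq k l = gaps_seq k l'"
  using assms by (simp add: gaps_seq_def del: upt_Suc)

lemma gaps_mset:
  assumes "mset (map l [0..<Suc k]) = mset (map l' [0..<Suc k])"
  shows "gaps_seq k l = gaps_seq k l'"
proof (rule gaps_sort_eq)
  show "sort (map l [0..<Suc k]) = sort (map l' [0..<Suc k])"
    by (rule properties_for_sort) (use assms in \<open>simp_all del: upt_Suc\<close>)
qed

lemma gaps_shift:
  fixes l :: "nat \<Rightarrow> real"
  shows "gaps_seq k (\<lambda>i. l i + c) = gaps_seq k l"
proof -
  have s: "sort (map (\<lambda>i. l i + c) [0..<Suc k]) = map (\<lambda>v. v + c) (sort (map l [0..<Suc k]))"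
  proof (rule properties_for_sort)
    show "mset (map (\<lambda>v. v + c) (sort (map l [0..<Suc k]))) = mset (map (\<lambda>i. l i + c) [0..<Suc k])"
      by (simp add: mset_map image_mset.compositionality o_def del: upt_Suc)
    show "sorted (map (\<lambda>v. v + c) (sort (map l [0..<Suc k])))"
      by (simp add: sorted_map del: upt_Suc)
  qed
  show ?thesis
  proof
    fix i show "gaps_seq k (\<lambda>i. l i + c) i = gaps_seq k l i"
    proof (cases "i \<in> {1..k}")
      case True
      then have l: "i < length (sort (map l [0..<Suc k]))" "i - Suc 0 < length (sort (map l [0..<Suc k]))" by auto
      show ?thesis using True
        by (simp add: gaps_seq_def s nth_map[OF l(1)] nth_map[OF l(2)] Let_def del: upt_Suc)
    next
      case False then show ?thesis unfolding gaps_seq_def by (simp only: restrict_apply if_False)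
    qed
  qed
qed

lemma gaps_cong:
  "(\<And>j. j \<le> k \<Longrightarrow> l j = l' j) \<Longrightarrow> gaps_seq k l = gaps_seq k l'"
proof (rule gaps_sort_eq)
  assume H: "\<And>j. j \<le> k \<Longrightarrow> l j = l' j"
  have "map l [0..<Suc k] = map l' [0..<Suc k]"
    by (rule map_cong[OF refl]) (use H in \<open>auto simp del: upt_Suc\<close>)
  then show "sort (map l [0..<Suc k]) = sort (map l' [0..<Suc k])" by (simp only:)
qed

lemma indicator_PiE_prod:
  assumes "finite I" "x \<in> extensional I"
  shows "indicator (Pi\<^sub>E I A) x = (\<Prod>i\<in>I. indicator (A i) (x i) :: ennreal)"
proof -
  have "(\<Prod>i\<in>I. indicator (A i) (x i) :: ennreal) = (\<Prod>i\<in>I. if x i \<in> A i then 1 else 0)"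
    by (intro prod.cong refl) (simp add: indicator_def)
  also have "\<dots> = (if \<forall>i\<in>I. x i \<in> A i then 1 else 0)" using assms(1) by (rule prod_bool_ennreal)
  finally show ?thesis using assms(2) by (auto simp: indicator_def PiE_def Pi_def)
qed

lemma PiM_density:
  fixes \<phi> :: "nat \<Rightarrow> real \<Rightarrow> ennreal"
  assumes I: "finite I" and phim: "\<And>i. i \<in> I \<Longrightarrow> \<phi> i \<in> borel_measurable borel"
    and sf: "\<And>i. i \<in> I \<Longrightarrow> sigma_finite_measure (density lborel (\<phi> i))"
  shows "PiM I (\<lambda>i. density lborel (\<phi> i)) = density (PL I) (\<lambda>x. \<Prod>i\<in>I. \<phi> i (x i))"
proof -
  define M' where "M' i = (if i \<in> I then density lborel (\<phi> i) else lborel)" for i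
  have sfl: "sigma_finite_measure (lborel :: real measure)" using PSF.sigma_finite_measures by simp
  have sfM: "sigma_finite_measure (M' i)" for i
    by (cases "i \<in> I") (simp_all add: M'_def sf sfl)
  interpret Q: product_sigma_finite M'
    unfolding product_sigma_finite_def using sfM by blast
  have e: "PiM I (\<lambda>i. density lborel (\<phi> i)) = PiM I M'"
    by (rule PiM_cong) (auto simp: M'_def)
  have "density (PL I) (\<lambda>x. \<Prod>i\<in>I. \<phi> i (x i)) = PiM I M'"
  proof (rule Q.PiM_eqI[OF I])
    show "sets (density (PL I) (\<lambda>x. \<Prod>i\<in>I. \<phi> i (x i))) = sets (PiM I M')"
      by (simp, rule sets_PiM_cong) (auto simp: M'_def)
    fix A :: "nat \<Rightarrow> real set" assume A: "\<And>i. i \<in> I \<Longrightarrow> A i \<in> sets (M' i)"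
    then have A': "\<And>i. i \<in> I \<Longrightarrow> A i \<in> sets borel" by (auto simp: M'_def)
    have phm: "(\<lambda>x. \<phi> i (x i)) \<in> borel_measurable (PL I)" if "i \<in> I" for i
      using measurable_comp[OF comp_meas[OF that] phim[OF that]] by (simp add: comp_def)
    have PA: "Pi\<^sub>E I A \<in> sets (PL I)" using A' I by (intro sets_PiM_I_finite) auto
    have "emeasure (density (PL I) (\<lambda>x. \<Prod>i\<in>I. \<phi> i (x i))) (Pi\<^sub>E I A)
        = (\<integral>\<^sup>+x. (\<Prod>i\<in>I. \<phi> i (x i)) * indicator (Pi\<^sub>E I A) x \<partial>PL I)"
      using PA by (subst emeasure_density) (auto intro!: borel_measurable_prod_ennreal phm)
    also have "\<dots> = (\<integral>\<^sup>+x. (\<Prod>i\<in>I. \<phi> i (x i) * indicator (A i) (x i)) \<partial>PL I)"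
    proof (rule nn_integral_cong)
      fix x assume "x \<in> space (PL I)"
      then have "x \<in> extensional I" by (simp add: space_PiM PiE_def)
      then show "(\<Prod>i\<in>I. \<phi> i (x i)) * indicator (Pi\<^sub>E I A) x = (\<Prod>i\<in>I. \<phi> i (x i) * indicator (A i) (x i))"
        by (simp only: indicator_PiE_prod[OF I] prod.distrib)
    qed
    also have "\<dots> = (\<Prod>i\<in>I. (\<integral>\<^sup>+y. \<phi> i y * indicator (A i) y \<partial>lborel))"
      using A' phim by (intro PSF.product_nn_integral_prod I) auto
    also have "\<dots> = (\<Prod>i\<in>I. emeasure (M' i) (A i))"
      using A' phim by (intro prod.cong refl) (simp add: M'_def emeasure_density)
    finally show "emeasure (density (PL I) (\<lambda>x. \<Prod>i\<in>I. \<phi> i (x i))) (Pi\<^sub>E I A) = (\<Prod>i\<in>I. emeasure (M' i) (A i))" .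
  qed
  with e show ?thesis by simp
qed



theorem proposition2:
  fixes M :: "'a measure" and X :: "real \<Rightarrow> 'a \<Rightarrow> real"
    and \<Phi> :: "real \<Rightarrow> real \<Rightarrow> ennreal"
    and k :: nat and t :: "nat \<Rightarrow> real" and g :: "nat \<Rightarrow> real"
  assumes "prob_space M"
    and meas: "\<And>s. X s \<in> borel_measurable M"
    and X0: "AE \<omega> in M. X 0 \<omega> = 0"
    and indep_incr: "\<And>(m::nat) s. m \<ge> 1 \<Longrightarrow> strict_mono_on {0..m} s \<Longrightarrow>
          prob_space.indep_vars M (\<lambda>_. borel) (\<lambda>i \<omega>. X (s i) \<omega> - X (s (i - 1)) \<omega>) {1..m}"
    and stat_incr: "\<And>s u. s < u \<Longrightarrow>
          distr M borel (\<lambda>\<omega>. X u \<omega> - X s \<omega>) = distr M borel (X (u - s))"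
    and dens: "\<And>s. s \<noteq> 0 \<Longrightarrow> distributed M lborel (X s) (\<Phi> s)"
    and "k \<ge> 1"
    and t0: "t 0 = 0"
    and tdist: "inj_on t {0..k}"
    and g: "\<And>i. i \<in> {1..k} \<Longrightarrow> g i = gaps_seq k t i"
  shows "distributed M (PiM {1..k} (\<lambda>_. lborel))
           (\<lambda>\<omega>. gaps_seq k (\<lambda>i. X (t i) \<omega>))
           (Psi \<Phi> k g)"
proof -
  interpret P: prob_space M by fact
  let ?I = "{1..k}"
  define L where "L = sort (map t [0..<Suc k])"
  define s where "s j = L ! j" for j
  have lenL: "length L = Suc k" by (simp add: L_def del: upt_Suc)
  have dL: "distinct L" unfolding L_def using tdist
    by (simp add: distinct_map atLeastLessThanSuc_atLeastAtMost del: upt_Suc)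
  have sL: "sorted_wrt (<) L" using dL by (simp add: strict_sorted_iff L_def del: upt_Suc)
  have smono: "strict_mono_on {0..k} s"
  proof (rule strict_mono_onI)
    fix i j assume "i \<in> {0..k}" "j \<in> {0..k}" "i < j"
    then show "s i < s j" unfolding s_def using sorted_wrt_nth_less[OF sL, of i j] lenL by auto
  qed
  have Ls: "L = map s [0..<Suc k]"
    by (rule nth_equalityI) (auto simp: lenL s_def simp del: upt_Suc)
  have gs: "g i = s i - s (i - 1)" if "i \<in> ?I" for i
    using g[OF that] that by (simp add: gaps_seq_def L_def s_def Let_def del: upt_Suc)
  have gpos: "g i > 0" if "i \<in> ?I" for i
    using gs[OF that] strict_mono_onD[OF smono, of "i - 1" i] that by auto
  define D where "D \<omega> = (\<lambda>i\<in>?I. X (s i) \<omega> - X (s (i - 1)) \<omega>)" for \<omega>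
  have rv: "(\<lambda>\<omega>. X (s i) \<omega> - X (s (i - 1)) \<omega>) \<in> borel_measurable M" for i
    using meas by measurable
  have ind: "P.indep_vars (\<lambda>_. borel) (\<lambda>i \<omega>. X (s i) \<omega> - X (s (i - 1)) \<omega>) ?I"
    using indep_incr[OF \<open>k \<ge> 1\<close> smono] .
  have dD0: "distr M (PiM ?I (\<lambda>_. borel)) D = PiM ?I (\<lambda>i. distr M borel (\<lambda>\<omega>. X (s i) \<omega> - X (s (i - 1)) \<omega>))"
    using P.indep_vars_iff_distr_eq_PiM[where I="{1..k}" and M'="\<lambda>_. borel" and X="\<lambda>i \<omega>. X (s i) \<omega> - X (s (i - 1)) \<omega>"] ind rv \<open>k \<ge> 1\<close>
    unfolding D_def by auto
  have dmarg: "distr M borel (\<lambda>\<omega>. X (s i) \<omega> - X (s (i - 1)) \<omega>) = density lborel (\<Phi> (g i))" if i: "i \<in> ?I" for i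
  proof -
    have lt: "s (i - 1) < s i" using gpos[OF i] gs[OF i] by simp
    have "distr M borel (\<lambda>\<omega>. X (s i) \<omega> - X (s (i - 1)) \<omega>) = distr M borel (X (g i))"
      using stat_incr[OF lt] gs[OF i] by simp
    also have "\<dots> = distr M lborel (X (g i))" by (rule distr_cong) auto
    also have "\<dots> = density lborel (\<Phi> (g i))"
      using dens[of "g i"] gpos[OF i] by (simp add: distributed_def)
    finally show ?thesis .
  qed
  have phim: "\<Phi> (g i) \<in> borel_measurable borel" if "i \<in> ?I" for i
    using dens[of "g i"] gpos[OF that] by (simp add: distributed_def)
  have sf: "sigma_finite_measure (density lborel (\<Phi> (g i)))" if i: "i \<in> ?I" for i
  proof -
    have "prob_space (distr M lborel (X (g i)))" using meas by (intro P.prob_space_distr) simp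
    then show ?thesis using dens[of "g i"] gpos[OF i]
      by (simp add: distributed_def prob_space_imp_sigma_finite)
  qed
  define F where "F x = (\<Prod>i\<in>?I. \<Phi> (g i) (x i))" for x
  have Fm: "F \<in> borel_measurable (PL ?I)"
    unfolding F_def
  proof (rule borel_measurable_prod_ennreal)
    fix i assume i: "i \<in> ?I"
    show "(\<lambda>x. \<Phi> (g i) (x i)) \<in> borel_measurable (PL ?I)"
      using measurable_comp[OF comp_meas[OF i] phim[OF i]] by (simp add: comp_def)
  qed
  have Dm: "D \<in> measurable M (PL ?I)"
    unfolding D_def by (rule measurable_restrict) (use rv in simp)
  have dD: "distr M (PL ?I) D = density (PL ?I) F"
  proof -
    have "distr M (PL ?I) D = distr M (PiM ?I (\<lambda>_. borel)) D"
      by (rule distr_cong) (auto intro!: sets_PiM_cong)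
    also have "\<dots> = PiM ?I (\<lambda>i. density lborel (\<Phi> (g i)))"
      unfolding dD0 by (rule PiM_cong) (rule refl, rule dmarg)
    also have "\<dots> = density (PL ?I) F"
      unfolding F_def by (rule PiM_density) (auto simp: phim sf)
    finally show ?thesis .
  qed
  have tele: "X (s j) \<omega> = xbar (D \<omega>) j + X (s 0) \<omega>" if "j \<le> k" for j \<omega>
    using that
  proof (induction j)
    case 0 then show ?case by simp
  next
    case (Suc j) then show ?case by (simp add: xbar_Suc D_def)
  qed
  have Yeq: "gaps_seq k (\<lambda>i. X (t i) \<omega>) = gaps_seq k (xbar (D \<omega>))" for \<omega>
  proof -
    have "mset (map (\<lambda>i. X (t i) \<omega>) [0..<Suc k]) = image_mset (\<lambda>v. X v \<omega>) (mset (map t [0..<Suc k]))"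
      by (simp add: mset_map image_mset.compositionality o_def del: upt_Suc)
    also have "mset (map t [0..<Suc k]) = mset (map s [0..<Suc k])"
      using Ls unfolding L_def by (metis mset_sort)
    also have "image_mset (\<lambda>v. X v \<omega>) (mset (map s [0..<Suc k])) = mset (map (\<lambda>j. X (s j) \<omega>) [0..<Suc k])"
      by (simp add: mset_map image_mset.compositionality o_def del: upt_Suc)
    finally have "gaps_seq k (\<lambda>i. X (t i) \<omega>) = gaps_seq k (\<lambda>j. X (s j) \<omega>)" by (rule gaps_mset)
    also have "\<dots> = gaps_seq k (\<lambda>j. xbar (D \<omega>) j + X (s 0) \<omega>)"
      by (rule gaps_cong) (rule tele)
    also have "\<dots> = gaps_seq k (xbar (D \<omega>))" by (rule gaps_shift)
    finally show ?thesis .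
  qed
  have PsiEq: "Psi \<Phi> k g x = (\<Sum>\<tau> | \<tau> permutes {0..k}. F (Lt k \<tau> x) * (\<Prod>i=1..k. if x i > 0 then 1 else 0))" for x
    unfolding Psi_def
  proof (rule sum.cong[OF refl])
    fix \<tau> assume "\<tau> \<in> {\<tau>. \<tau> permutes {0..k}}"
    have "F (Lt k \<tau> x) = (\<Prod>i=1..k. \<Phi> (g i) (xbar x (\<tau> i) - xbar x (\<tau> (i - 1))))"
      unfolding F_def Lt_def by (rule prod.cong) auto
    then show "(\<Prod>i = 1..k. \<Phi> (g i) (xbar x (\<tau> i) - xbar x (\<tau> (i - 1))) * (if 0 < x i then 1 else 0))
        = F (Lt k \<tau> x) * (\<Prod>i = 1..k. if 0 < x i then 1 else 0)"
      by (simp add: prod.distrib)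
  qed
  have Psim: "Psi \<Phi> k g \<in> borel_measurable (PL ?I)"
  proof -
    have "(\<lambda>x. \<Sum>\<tau> | \<tau> permutes {0..k}. F (Lt k \<tau> x) * (\<Prod>i=1..k. if x i > 0 then 1 else 0)) \<in> borel_measurable (PL ?I)"
    proof (rule borel_measurable_sum)
      fix \<tau> assume t: "\<tau> \<in> {\<tau>. \<tau> permutes {0..k}}"
      have [measurable]: "Lt k \<tau> \<in> measurable (PL ?I) (PL ?I)" using t Lt_meas by simp
      have [measurable]: "(\<lambda>x. \<Prod>i=1..k. if x i > 0 then 1 else 0 :: ennreal) \<in> borel_measurable (PL ?I)"
      proof (rule borel_measurable_prod_ennreal)
        fix i assume "i \<in> {1..k}"
        then have [measurable]: "(\<lambda>x. x i) \<in> borel_measurable (PL {1..k})" by (rule comp_meas)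
        show "(\<lambda>x. if x i > 0 then 1 else 0 :: ennreal) \<in> borel_measurable (PL {1..k})" by measurable
      qed
      note Fm[measurable]
      show "(\<lambda>x. F (Lt k \<tau> x) * (\<Prod>i=1..k. if x i > 0 then 1 else 0)) \<in> borel_measurable (PL ?I)"
        by measurable
    qed
    moreover have "Psi \<Phi> k g = (\<lambda>x. \<Sum>\<tau> | \<tau> permutes {0..k}. F (Lt k \<tau> x) * (\<Prod>i=1..k. if x i > 0 then 1 else 0))"
      by (rule ext) (rule PsiEq)
    ultimately show ?thesis by simp
  qed
  have Ym: "(\<lambda>\<omega>. gaps_seq k (\<lambda>i. X (t i) \<omega>)) \<in> measurable M (PL ?I)"
    by (rule gaps_meas) (rule meas)
  have "distr M (PL ?I) (\<lambda>\<omega>. gaps_seq k (\<lambda>i. X (t i) \<omega>)) = density (PL ?I) (Psi \<Phi> k g)"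
  proof -
    have "distr M (PL ?I) (\<lambda>\<omega>. gaps_seq k (\<lambda>i. X (t i) \<omega>)) = distr M (PL ?I) ((\<lambda>d. gaps_seq k (xbar d)) \<circ> D)"
      by (simp add: Yeq o_def)
    also have "\<dots> = distr (distr M (PL ?I) D) (PL ?I) (\<lambda>d. gaps_seq k (xbar d))"
      by (rule distr_distr[symmetric, OF Gm_meas Dm])
    also have "\<dots> = distr (density (PL ?I) F) (PL ?I) (\<lambda>d. gaps_seq k (xbar d))"
      by (simp only: dD)
    also have "\<dots> = density (PL ?I) (Psi \<Phi> k g)"
    proof (rule measure_eqI)
      show "sets (distr (density (PL ?I) F) (PL ?I) (\<lambda>d. gaps_seq k (xbar d))) = sets (density (PL ?I) (Psi \<Phi> k g))"
        by simp
      fix A assume A: "A \<in> sets (distr (density (PL ?I) F) (PL ?I) (\<lambda>d. gaps_seq k (xbar d)))"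
      then have A': "A \<in> sets (PL ?I)" by simp
      have GmF: "(\<lambda>d. gaps_seq k (xbar d)) \<in> measurable (density (PL ?I) F) (PL ?I)"
        using Gm_meas by simp
      have "emeasure (distr (density (PL ?I) F) (PL ?I) (\<lambda>d. gaps_seq k (xbar d))) A
          = emeasure (density (PL ?I) F) ((\<lambda>d. gaps_seq k (xbar d)) -` A \<inter> space (PL ?I))"
        using A' GmF by (subst emeasure_distr) auto
      also have "\<dots> = (\<integral>\<^sup>+d. F d * indicator ((\<lambda>d. gaps_seq k (xbar d)) -` A \<inter> space (PL ?I)) d \<partial>PL ?I)"
        using A' Fm Gm_meas by (subst emeasure_density) (auto intro: measurable_sets)
      also have "\<dots> = (\<integral>\<^sup>+d. indicator A (gaps_seq k (xbar d)) * F d \<partial>PL ?I)"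
        by (intro nn_integral_cong) (auto simp: indicator_def)
      also have "\<dots> = (\<integral>\<^sup>+x. indicator A x * (\<Sum>\<tau> | \<tau> permutes {0..k}. F (Lt k \<tau> x) * (\<Prod>i=1..k. if x i > 0 then 1 else 0)) \<partial>PL ?I)"
        using A' by (intro main_analytic Fm) simp
      also have "\<dots> = (\<integral>\<^sup>+x. Psi \<Phi> k g x * indicator A x \<partial>PL ?I)"
        by (simp add: PsiEq mult.commute)
      also have "\<dots> = emeasure (density (PL ?I) (Psi \<Phi> k g)) A"
        using A' Psim by (subst emeasure_density) auto
      finally show "emeasure (distr (density (PL ?I) F) (PL ?I) (\<lambda>d. gaps_seq k (xbar d))) A = emeasure (density (PL ?I) (Psi \<Phi> k g)) A" .
    qed
    finally show ?thesis .
  qed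
  then show ?thesis using Psim Ym by (simp add: distributed_def)
qed


end
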